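(* Let $m=2$ attributes, each taking values in $\{1,\dots,d\}$, with $p(\cdot\mid z)$ an additive energy distribution for all $z\in\{1,\dots,d\}^2$. Suppose $\mathcal{Z}^{\mathsf{train}}$ (the support of the training prior) consists of $s$ attribute vectors drawn uniformly at random from $\{1,\dots,d\}^2$, and let $q(x,z)=q(z)q(x\mid z)$ be a test distribution with $q(x\mid z)=p(x\mid z)$ for all $z\in\{1,\dots,d\}^2$ and attribute support $\mathcal{Z}^{\mathsf{test}}\subseteq\{1,\dots,d\}^2$. Let $c>0$. If $s\ge 8cd\log d$ with $d$ sufficiently large, the additive energy classifier satisfies $\hat p(z\mid x)=p(z\mid x)$ for all $z\in\mathcal{Z}^{\mathsf{train}}$ and $x\in\mathbb{R}^n$, and $\hat q(z)=q(z)$ for all $z\in\mathcal{Z}^{\mathsf{test}}$, then with probability greater than $1-\frac1c$ the CRM predictor satisfies $\hat q(z\mid x)=q(z\mid x)$ for all $z\in\mathcal{Z}^{\mathsf{test}}$ and $x\in\mathbb{R}^n$.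
   Context: $\sigma(z)\in\{0,1\}^{2d}$ is the concatenation of one-hot encodings of $z_1,z_2$. An additive energy distribution family is $p(x\mid z)=\frac{1}{\mathbb{Z}(z)}\exp(-\langle\sigma(z),E(x)\rangle)$ with $E:\mathbb{R}^n\to\mathbb{R}^{2d}$, $\mathbb{Z}(z)=\int\exp(-\langle\sigma(z),E(x)\rangle)dx<\infty$, support $\mathbb{R}^n$. Given $\hat E:\mathbb{R}^n\to\mathbb{R}^{2d}$, $\hat B:\mathcal{Z}^{\mathsf{train}}\to\mathbb{R}$, the additive energy classifier is $\hat p(z\mid x)\propto\exp(-\langle\sigma(z),\hat E(x)\rangle+\log p(z)-\hat B(z))$, normalized over $z\in\mathcal{Z}^{\mathsf{train}}$. The extrapolated bias is $B^\star(z)=\log\mathbb{E}_{x\sim p(x)}\big[\exp(-\langle\sigma(z),\hat E(x)\rangle)/\sum_{\tilde z\in\mathcal{Z}^{\mathsf{train}}}\exp(-\langle\sigma(\tilde z),\hat E(x)\rangle+\log p(\tilde z)-\hat B(\tilde z))\big]$, with $p(x)$ the training marginal. Given a distribution $\hat q$ on attributes, the CRM predictor is $\hat q(z\mid x)\propto\exp(-\langle\sigma(z),\hat E(x)\rangle+\log\hat q(z)-B^\star(z))$, normalized over the support of $\hat q$. *)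

theory Defs
  imports "HOL-Analysis.Analysis" "HOL-Probability.Probability"
begin

definition grid :: "nat \<Rightarrow> (nat \<times> nat) set" where
  "grid d = {1..d} \<times> {1..d}"

text \<open>sigma(z) in {0,1}^(2d): concatenation of the one-hot encodings of z1 and z2.
  Coordinates are indexed by 0..<2d; coordinate z1-1 encodes z1, coordinate d+z2-1 encodes z2.\<close>
definition sigma :: "nat \<Rightarrow> nat \<times> nat \<Rightarrow> nat \<Rightarrow> real" where
  "sigma d z i = (if i = fst z - 1 \<or> i = d + snd z - 1 then 1 else 0)"

definition senergy :: "nat \<Rightarrow> nat \<times> nat \<Rightarrow> (nat \<Rightarrow> real) \<Rightarrow> real" where
  "senergy d z e = (\<Sum>i<2*d. sigma d z i * e i)"

definition partition :: "nat \<Rightarrow> ('x::euclidean_space \<Rightarrow> nat \<Rightarrow> real) \<Rightarrow> nat \<times> nat \<Rightarrow> real" where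
  "partition d E z = (\<integral>x. exp (- senergy d z (E x)) \<partial>lborel)"

definition cond_density :: "nat \<Rightarrow> ('x::euclidean_space \<Rightarrow> nat \<Rightarrow> real) \<Rightarrow> nat \<times> nat \<Rightarrow> 'x \<Rightarrow> real" where
  "cond_density d E z x = exp (- senergy d z (E x)) / partition d E z"

definition bayes_post :: "(nat \<times> nat) set \<Rightarrow> (nat \<times> nat \<Rightarrow> real) \<Rightarrow> (nat \<times> nat \<Rightarrow> 'x \<Rightarrow> real)
    \<Rightarrow> nat \<times> nat \<Rightarrow> 'x \<Rightarrow> real" where
  "bayes_post Z r dens z x = r z * dens z x / (\<Sum>z'\<in>Z. r z' * dens z' x)"

definition marginal :: "(nat \<times> nat) set \<Rightarrow> (nat \<times> nat \<Rightarrow> real) \<Rightarrow> (nat \<times> nat \<Rightarrow> 'x \<Rightarrow> real) \<Rightarrow> 'x \<Rightarrow> real" where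
  "marginal Z r dens x = (\<Sum>z\<in>Z. r z * dens z x)"

definition aec_norm :: "nat \<Rightarrow> (nat \<times> nat) set \<Rightarrow> (nat \<times> nat \<Rightarrow> real) \<Rightarrow> ('x \<Rightarrow> nat \<Rightarrow> real)
    \<Rightarrow> (nat \<times> nat \<Rightarrow> real) \<Rightarrow> 'x \<Rightarrow> real" where
  "aec_norm d Ztr ptr Ehat Bhat x =
     (\<Sum>z'\<in>Ztr. exp (- senergy d z' (Ehat x) + ln (ptr z') - Bhat z'))"

definition aec_post :: "nat \<Rightarrow> (nat \<times> nat) set \<Rightarrow> (nat \<times> nat \<Rightarrow> real) \<Rightarrow> ('x \<Rightarrow> nat \<Rightarrow> real)
    \<Rightarrow> (nat \<times> nat \<Rightarrow> real) \<Rightarrow> nat \<times> nat \<Rightarrow> 'x \<Rightarrow> real" where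
  "aec_post d Ztr ptr Ehat Bhat z x =
     exp (- senergy d z (Ehat x) + ln (ptr z) - Bhat z) / aec_norm d Ztr ptr Ehat Bhat x"

text \<open>Extrapolated bias B*(z) = log E_{x ~ p(x)}[exp(-<sigma(z),Ehat(x)>) / aec_norm(x)],
  the expectation over the training marginal written as a Lebesgue integral against its density.\<close>
definition extrap_bias :: "nat \<Rightarrow> (nat \<times> nat) set \<Rightarrow> (nat \<times> nat \<Rightarrow> real)
    \<Rightarrow> (nat \<times> nat \<Rightarrow> 'x::euclidean_space \<Rightarrow> real) \<Rightarrow> ('x \<Rightarrow> nat \<Rightarrow> real)
    \<Rightarrow> (nat \<times> nat \<Rightarrow> real) \<Rightarrow> nat \<times> nat \<Rightarrow> real" where
  "extrap_bias d Ztr ptr dens Ehat Bhat z =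
     ln (\<integral>x. marginal Ztr ptr dens x *
               (exp (- senergy d z (Ehat x)) / aec_norm d Ztr ptr Ehat Bhat x) \<partial>lborel)"

definition crm_post :: "nat \<Rightarrow> (nat \<times> nat) set \<Rightarrow> (nat \<times> nat \<Rightarrow> real) \<Rightarrow> ('x \<Rightarrow> nat \<Rightarrow> real)
    \<Rightarrow> (nat \<times> nat \<Rightarrow> real) \<Rightarrow> nat \<times> nat \<Rightarrow> 'x \<Rightarrow> real" where
  "crm_post d Zq qhat Ehat Bstar z x =
     exp (- senergy d z (Ehat x) + ln (qhat z) - Bstar z) /
     (\<Sum>z'\<in>Zq. exp (- senergy d z' (Ehat x) + ln (qhat z') - Bstar z'))"

end

theory Submission
  imports Defs "HOL-Real_Asymp.Real_Asymp"
begin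

definition conn :: "nat \<Rightarrow> (nat \<times> nat) set \<Rightarrow> bool" where
  "conn d Z = (\<forall>S T. S \<subseteq> {1..d} \<longrightarrow> T \<subseteq> {1..d} \<longrightarrow> S \<noteq> {} \<longrightarrow>
      Z \<subseteq> S \<times> T \<union> ({1..d} - S) \<times> ({1..d} - T) \<longrightarrow> S = {1..d} \<and> T = {1..d})"

lemma senergy_eq:
  assumes "z \<in> grid d"
  shows "senergy d z e = e (fst z - 1) + e (d + snd z - 1)"
proof -
  obtain i j where z: "z = (i,j)" "1 \<le> i" "i \<le> d" "1 \<le> j" "j \<le> d"
    using assms by (cases z) (auto simp: grid_def)
  have ne: "i - 1 \<noteq> d + j - 1" using z by auto
  have "senergy d z e = (\<Sum>k<2*d. (if k = i - 1 then e k else 0) + (if k = d + j - 1 then e k else 0))"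
    unfolding senergy_def sigma_def z using ne by (intro sum.cong) auto
  also have "\<dots> = e (i - 1) + e (d + j - 1)"
    using z by (simp add: sum.distrib; linarith)
  finally show ?thesis using z by simp
qed

lemma conn_extend:
  assumes "conn d Z" "Z \<subseteq> grid d" "Z \<noteq> {}"
    and h: "\<And>i j. (i,j) \<in> Z \<Longrightarrow> u i + v j = (\<eta>::real)"
    and "(i,j) \<in> grid d"
  shows "u i + v j = \<eta>"
proof -
  obtain i0 j0 where ij0: "(i0,j0) \<in> Z" using assms(3) by auto
  define S where "S = {i\<in>{1..d}. u i = u i0}"
  define T where "T = {j\<in>{1..d}. v j = \<eta> - u i0}"
  have "i0 \<in> S" using ij0 assms(2) by (auto simp: S_def grid_def)
  moreover have "Z \<subseteq> S \<times> T \<union> ({1..d} - S) \<times> ({1..d} - T)"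
  proof
    fix z assume "z \<in> Z"
    then obtain a b where z: "z = (a,b)" "(a,b) \<in> Z" by (cases z) auto
    then have "a \<in> {1..d}" "b \<in> {1..d}" using assms(2) by (auto simp: grid_def)
    moreover have "u a + v b = \<eta>" using h z by auto
    ultimately show "z \<in> S \<times> T \<union> ({1..d} - S) \<times> ({1..d} - T)"
      unfolding S_def T_def z by auto
  qed
  ultimately have "S = {1..d} \<and> T = {1..d}" using assms(1) unfolding conn_def
    by (metis (no_types, lifting) S_def T_def empty_iff mem_Collect_eq subsetI)
  then have "i \<in> S" "j \<in> T" using assms(5) by (auto simp: grid_def)
  then show ?thesis by (auto simp: S_def T_def)
qed

lemma partition_pos:
  fixes E :: "'x::euclidean_space \<Rightarrow> nat \<Rightarrow> real"
  assumes "integrable lborel (\<lambda>x. exp (- senergy d z (E x)))"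
  shows "partition d E z > 0"
proof -
  have ge: "partition d E z \<ge> 0" unfolding partition_def by (intro integral_nonneg_AE) auto
  have "partition d E z \<noteq> 0"
  proof
    assume "partition d E z = 0"
    then have "AE x in lborel. exp (- senergy d z (E x)) = 0"
      using integral_nonneg_eq_0_iff_AE[OF assms] unfolding partition_def by auto
    then have "AE x::'x in lborel. False" by simp
    then have "ae_filter (lborel::'x measure) = bot" using trivial_limit_def by blast
    then show False unfolding ae_filter_eq_bot_iff by simp
  qed
  then show ?thesis using ge by linarith
qed

lemma det:
  fixes E Ehat :: "'x::euclidean_space \<Rightarrow> nat \<Rightarrow> real"
  assumes d1: "d \<ge> 1" and Zg: "Ztr \<subseteq> grid d" and Zne: "Ztr \<noteq> {}" and cn: "conn d Ztr"
  and int: "\<forall>z\<in>grid d. integrable lborel (\<lambda>x. exp (- senergy d z (E x)))"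
  and Zt: "Ztest \<subseteq> grid d" and qpos: "\<forall>z\<in>Ztest. q z > 0" and qsum: "(\<Sum>z\<in>Ztest. q z) = 1"
  and ptr: "\<forall>z\<in>Ztr. ptr z > 0"
  and aec: "\<forall>z\<in>Ztr. \<forall>x. aec_post d Ztr ptr Ehat Bhat z x
                              = bayes_post Ztr ptr (cond_density d E) z x"
  and qh0: "\<forall>z\<in>grid d. qhat z \<ge> 0" and qh1: "(\<Sum>z\<in>grid d. qhat z) = 1"
  and qhq: "\<forall>z\<in>Ztest. qhat z = q z"
  shows "\<forall>z\<in>Ztest. \<forall>x.
                  crm_post d {z'\<in>grid d. qhat z' > 0} qhat Ehat
                    (extrap_bias d Ztr ptr (cond_density d E) Ehat Bhat) z x
                  = bayes_post Ztest q (cond_density d E) z x"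
proof -
  have fg: "finite (grid d)" by (simp add: grid_def)
  have fZ: "finite Ztr" using Zg fg finite_subset by blast
  have fT: "finite Ztest" using Zt fg finite_subset by blast
  have Zq: "{z'\<in>grid d. qhat z' > 0} = Ztest"
  proof -
    have "(\<Sum>z\<in>grid d. qhat z) = (\<Sum>z\<in>grid d - Ztest. qhat z) + (\<Sum>z\<in>Ztest. qhat z)"
      using sum.subset_diff[OF Zt fg] by simp
    moreover have "(\<Sum>z\<in>Ztest. qhat z) = 1" using qhq qsum by simp
    ultimately have "(\<Sum>z\<in>grid d - Ztest. qhat z) = 0" using qh1 by simp
    then have "\<forall>z\<in>grid d - Ztest. qhat z = 0"
      using sum_nonneg_eq_0_iff[of "grid d - Ztest" qhat] fg qh0 by auto
    then show ?thesis using qhq qpos Zt by force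
  qed
  have Zpos: "\<And>z. z \<in> grid d \<Longrightarrow> partition d E z > 0"
    using int partition_pos by blast
  define P where "P x = marginal Ztr ptr (cond_density d E) x" for x
  define N where "N x = aec_norm d Ztr ptr Ehat Bhat x" for x
  have Ppos: "P x > 0" for x
    unfolding P_def marginal_def cond_density_def
    using fZ Zne ptr Zg Zpos by (intro sum_pos) auto
  have Npos: "N x > 0" for x
    unfolding N_def aec_norm_def using fZ Zne by (intro sum_pos) auto
  define D where "D z x = senergy d z (Ehat x) - senergy d z (E x) - ln (P x) + ln (N x)" for z x
  have Dtr: "D z x = ln (partition d E z) - Bhat z" if z: "z \<in> Ztr" for z x
  proof -
    have zp: "partition d E z > 0" using Zg z by (intro Zpos) auto
    have pz: "ptr z > 0" using ptr z by auto
    have "exp (- senergy d z (Ehat x) + ln (ptr z) - Bhat z) / N x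
        = ptr z * (exp (- senergy d z (E x)) / partition d E z) / P x"
      using aec z unfolding aec_post_def bayes_post_def N_def P_def marginal_def cond_density_def
      by auto
    then have "ln (exp (- senergy d z (Ehat x) + ln (ptr z) - Bhat z) / N x)
        = ln (ptr z * (exp (- senergy d z (E x)) / partition d E z) / P x)" by simp
    then have "(- senergy d z (Ehat x) + ln (ptr z) - Bhat z) - ln (N x)
        = ln (ptr z) + (- senergy d z (E x) - ln (partition d E z)) - ln (P x)"
      using Npos[of x] Ppos[of x] zp pz by (simp add: ln_div ln_mult)
    then show ?thesis unfolding D_def by simp
  qed
  have Dconst: "D z x = D z x'" if z: "z \<in> grid d" for z x x'
  proof -
    define u where "u i = (Ehat x (i-1) - E x (i-1)) - (Ehat x' (i-1) - E x' (i-1))" for i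
    define v where "v j = (Ehat x (d+j-1) - E x (d+j-1)) - (Ehat x' (d+j-1) - E x' (d+j-1))" for j
    define \<eta> where "\<eta> = (ln (P x) - ln (N x)) - (ln (P x') - ln (N x'))"
    have key: "D (i,j) x = D (i,j) x' \<longleftrightarrow> u i + v j = \<eta>" if "(i,j) \<in> grid d" for i j
      using that unfolding D_def u_def v_def \<eta>_def by (simp add: senergy_eq) linarith
    have "u i + v j = \<eta>" if "(i,j) \<in> Ztr" for i j
      using key[of i j] Dtr[OF that] that Zg by auto
    then have "\<And>i j. (i,j) \<in> grid d \<Longrightarrow> u i + v j = \<eta>"
      using conn_extend[OF cn Zg Zne] by blast
    then show ?thesis using key z by (cases z) auto
  qed
  define K where "K z = D z 0" for z
  have sE: "senergy d z (Ehat x) = senergy d z (E x) + ln (P x) - ln (N x) + K z"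
    if "z \<in> grid d" for z x
    using Dconst[OF that, of x 0] unfolding K_def D_def by simp
  have Bs: "extrap_bias d Ztr ptr (cond_density d E) Ehat Bhat z = - K z + ln (partition d E z)"
    if z: "z \<in> grid d" for z
  proof -
    have "\<And>x. marginal Ztr ptr (cond_density d E) x *
               (exp (- senergy d z (Ehat x)) / aec_norm d Ztr ptr Ehat Bhat x)
          = exp (- K z) * exp (- senergy d z (E x))"
    proof -
      fix x
      have "exp (- senergy d z (Ehat x)) = exp (- senergy d z (E x)) * N x / P x * exp (- K z)"
      proof -
        have "exp (- senergy d z (Ehat x)) = exp (- senergy d z (E x) + (- ln (P x)) + ln (N x) + (- K z))"
          using sE[OF z, of x] by (simp add: algebra_simps)
        also have "\<dots> = exp (- senergy d z (E x)) * (1 / P x) * N x * exp (- K z)"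
          unfolding exp_add using Ppos[of x] Npos[of x] by (simp add: exp_minus field_simps)
        finally show ?thesis by simp
      qed
      then show "marginal Ztr ptr (cond_density d E) x *
               (exp (- senergy d z (Ehat x)) / aec_norm d Ztr ptr Ehat Bhat x)
          = exp (- K z) * exp (- senergy d z (E x))"
        using Ppos[of x] Npos[of x] unfolding P_def[symmetric] N_def[symmetric] by simp
    qed
    then have "extrap_bias d Ztr ptr (cond_density d E) Ehat Bhat z
        = ln (exp (- K z) * partition d E z)"
      unfolding extrap_bias_def partition_def by simp
    then show ?thesis using Zpos[OF z] by (simp add: ln_mult)
  qed
  have trm: "exp (- senergy d z (Ehat x) + ln (qhat z) - extrap_bias d Ztr ptr (cond_density d E) Ehat Bhat z)
      = q z * cond_density d E z x * (N x / P x)" if z: "z \<in> Ztest" for z x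
  proof -
    have zg: "z \<in> grid d" using z Zt by auto
    have "- senergy d z (Ehat x) + ln (qhat z) - extrap_bias d Ztr ptr (cond_density d E) Ehat Bhat z
       = - senergy d z (E x) + ln (q z) + (- ln (partition d E z)) + ln (N x) + (- ln (P x))"
      using sE[OF zg, of x] Bs[OF zg] qhq z by simp
    then have "exp (- senergy d z (Ehat x) + ln (qhat z) - extrap_bias d Ztr ptr (cond_density d E) Ehat Bhat z)
       = exp (- senergy d z (E x) + ln (q z) + (- ln (partition d E z)) + ln (N x) + (- ln (P x)))"
      by (rule arg_cong[where f=exp])
    also have "\<dots> = exp (- senergy d z (E x)) * q z * (1 / partition d E z) * N x * (1 / P x)"
      unfolding exp_add using qpos z Zpos[OF zg] Ppos[of x] Npos[of x] by (simp add: exp_minus field_simps)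
    finally show ?thesis unfolding cond_density_def by simp
  qed
  show ?thesis
  proof (intro ballI allI)
    fix z x assume z: "z \<in> Ztest"
    have W: "N x / P x \<noteq> 0" using Ppos[of x] Npos[of x] by simp
    have "crm_post d {z'\<in>grid d. qhat z' > 0} qhat Ehat
                    (extrap_bias d Ztr ptr (cond_density d E) Ehat Bhat) z x
        = (q z * cond_density d E z x * (N x / P x)) /
          (\<Sum>z'\<in>Ztest. q z' * cond_density d E z' x * (N x / P x))"
      unfolding crm_post_def Zq using trm z by simp
    also have "\<dots> = bayes_post Ztest q (cond_density d E) z x"
      unfolding bayes_post_def sum_distrib_right[symmetric] using W by simp
    finally show "crm_post d {z'\<in>grid d. qhat z' > 0} qhat Ehat
                    (extrap_bias d Ztr ptr (cond_density d E) Ehat Bhat) z x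
                  = bayes_post Ztest q (cond_density d E) z x" .
  qed
qed


lemma g_bound:
  fixes a b dd :: real
  assumes "0 \<le> a" "0 \<le> b" "a + b \<le> dd"
  shows "2 * (a*(dd-b) + b*(dd-a)) \<ge> dd * (a+b)"
proof -
  have h1: "a*(dd-2*b) \<ge> a*(a-b)" using assms by (intro mult_left_mono) auto
  have h2: "b*(dd-2*a) \<ge> b*(b-a)" using assms by (intro mult_left_mono) auto
  have h3: "(a-b)*(a-b) \<ge> 0" by simp
  show ?thesis using h1 h2 h3 by (simp add: algebra_simps)
qed

lemma term_bound:
  fixes a b dd :: real and s :: nat
  assumes a: "0 \<le> a" "a \<le> dd" and b: "0 \<le> b" "b \<le> dd" and d2: "dd \<ge> 2"
    and s: "real s \<ge> 8*dd*ln dd"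
  shows "((a*b + (dd-a)*(dd-b))/dd^2)^s \<le> exp(-4*(a+b)*ln dd) + exp(-4*((dd-a)+(dd-b))*ln dd)"
proof -
  define g where "g = (a*(dd-b) + b*(dd-a))/dd^2"
  have dpos: "dd > 0" using d2 by simp
  have r: "(a*b + (dd-a)*(dd-b))/dd^2 = 1 - g"
    unfolding g_def using dpos by (simp add: field_simps power2_eq_square)
  have r0: "(a*b + (dd-a)*(dd-b))/dd^2 \<ge> 0" using a b dpos by (intro divide_nonneg_pos) auto
  have g0: "g \<ge> 0" unfolding g_def using a b by (intro divide_nonneg_nonneg) auto
  have ln0: "ln dd \<ge> 0" using d2 by simp
  have "((a*b + (dd-a)*(dd-b))/dd^2)^s \<le> exp (-g) ^ s"
    using r r0 exp_ge_add_one_self[of "-g"] by (intro power_mono) auto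
  also have "\<dots> = exp (- (real s * g))" by (simp add: exp_of_nat_mult[symmetric])
  also have "\<dots> \<le> exp(-4*(a+b)*ln dd) + exp(-4*((dd-a)+(dd-b))*ln dd)"
  proof (cases "a + b \<le> dd")
    case True
    have "2 * (a*(dd-b) + b*(dd-a)) \<ge> dd * (a+b)" using g_bound[OF a(1) b(1) True] .
    then have "2 * (a*(dd-b) + b*(dd-a)) / dd \<ge> dd * (a+b) / dd"
      using dpos by (intro divide_right_mono) auto
    moreover have "g * (2*dd) = 2 * (a*(dd-b) + b*(dd-a)) / dd"
      unfolding g_def using dpos by (simp add: field_simps power2_eq_square)
    ultimately have gg: "g * (2*dd) \<ge> a + b" using dpos by simp
    have e1: "real s * g \<ge> 8*dd*ln dd * g" using s g0 by (intro mult_right_mono) auto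
    have e2: "8*dd*ln dd * g = 4 * ln dd * (g * (2*dd))" by simp
    have e3: "4 * ln dd * (g * (2*dd)) \<ge> 4 * ln dd * (a+b)"
      using gg ln0 by (intro mult_left_mono) auto
    have e4: "4 * ln dd * (a+b) = 4*(a+b)*ln dd" by simp
    have "real s * g \<ge> 4*(a+b)*ln dd" using e1 e2 e3 e4 by linarith
    then have "exp (- (real s * g)) \<le> exp(-4*(a+b)*ln dd)" by (simp add: algebra_simps)
    then show ?thesis by (smt (verit) exp_gt_zero)
  next
    case False
    have "2 * ((dd-a)*(dd-(dd-b)) + (dd-b)*(dd-(dd-a))) \<ge> dd * ((dd-a)+(dd-b))"
      using False a b by (intro g_bound) auto
    then have "2 * ((dd-a)*(dd-(dd-b)) + (dd-b)*(dd-(dd-a))) / dd \<ge> dd * ((dd-a)+(dd-b)) / dd"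
      using dpos by (intro divide_right_mono) auto
    moreover have "g * (2*dd) = 2 * ((dd-a)*(dd-(dd-b)) + (dd-b)*(dd-(dd-a))) / dd"
      unfolding g_def using dpos by (simp add: field_simps power2_eq_square)
    ultimately have gg: "g * (2*dd) \<ge> (dd-a)+(dd-b)" using dpos by simp
    have e1: "real s * g \<ge> 8*dd*ln dd * g" using s g0 by (intro mult_right_mono) auto
    have e2: "8*dd*ln dd * g = 4 * ln dd * (g * (2*dd))" by simp
    have e3: "4 * ln dd * (g * (2*dd)) \<ge> 4 * ln dd * ((dd-a)+(dd-b))"
      using gg ln0 by (intro mult_left_mono) auto
    have e4: "4 * ln dd * ((dd-a)+(dd-b)) = 4*((dd-a)+(dd-b))*ln dd" by simp
    have "real s * g \<ge> 4*((dd-a)+(dd-b))*ln dd" using e1 e2 e3 e4 by linarith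
    then have "exp (- (real s * g)) \<le> exp(-4*((dd-a)+(dd-b))*ln dd)" by (simp add: algebra_simps)
    then show ?thesis by (smt (verit) exp_gt_zero)
  qed
  finally show ?thesis .
qed

lemma exp_pow_y:
  fixes dd :: real assumes "dd > 0"
  shows "exp (-4 * real n * ln dd) = (1/dd^4)^n"
proof -
  have "exp (-4 * real n * ln dd) = exp (real n * (-4 * ln dd))" by (simp add: algebra_simps)
  also have "\<dots> = exp (-4 * ln dd) ^ n" by (rule exp_of_nat_mult)
  also have "exp (-4 * ln dd) = 1/dd^4"
  proof -
    have "exp (4 * ln dd) = dd^4" using assms ln_realpow[of dd 4] exp_ln[of "dd^4"] by simp
    then show ?thesis by (simp add: exp_minus inverse_eq_divide)
  qed
  finally show ?thesis .
qed


lemma sum_pow_card: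
  fixes y :: real assumes "finite R"
  shows "(\<Sum>S\<in>Pow R. y^card S) = (1+y)^card R"
  using prod_add[OF assms, of "\<lambda>_. y" "\<lambda>_. 1"] by (simp add: add.commute)

lemma sum_pow_card_compl:
  fixes y :: real assumes "finite R"
  shows "(\<Sum>S\<in>Pow R. y^card (R-S)) = (1+y)^card R"
  using prod_add[OF assms, of "\<lambda>_. 1" "\<lambda>_. y"] by simp

lemma sum_pairs:
  fixes y :: real and h :: "'a set \<Rightarrow> nat"
  assumes "finite R" "y \<ge> 0" "(\<Sum>S\<in>Pow R. y^h S) = (1+y)^card R" "pz \<in> Pow R \<times> Pow R"
    "y^(h (fst pz) + h (snd pz)) = 1"
    "B \<subseteq> Pow R \<times> Pow R - {pz}"
  shows "(\<Sum>p\<in>B. y^(h (fst p) + h (snd p))) \<le> (1+y)^(2*card R) - 1"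
proof -
  have fin: "finite (Pow R \<times> Pow R)" using assms(1) by simp
  have "(\<Sum>p\<in>B. y^(h (fst p) + h (snd p))) \<le> (\<Sum>p\<in>Pow R \<times> Pow R - {pz}. y^(h (fst p) + h (snd p)))"
    using assms(2,6) fin by (intro sum_mono2) auto
  also have "\<dots> = (\<Sum>p\<in>Pow R \<times> Pow R. y^(h (fst p) + h (snd p))) - 1"
    using sum_diff1[of "Pow R \<times> Pow R" "\<lambda>p. y^(h (fst p) + h (snd p))" pz] fin assms(4,5) by simp
  also have "(\<Sum>p\<in>Pow R \<times> Pow R. y^(h (fst p) + h (snd p))) = (\<Sum>S\<in>Pow R. y^h S) * (\<Sum>T\<in>Pow R. y^h T)"
    by (simp add: sum_product sum.cartesian_product power_add case_prod_beta)
  also have "\<dots> = (1+y)^(2*card R)" using assms(3) by (simp add: power_add[symmetric] mult_2)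
  finally show ?thesis .
qed

definition Acut :: "nat \<Rightarrow> nat set \<Rightarrow> nat set \<Rightarrow> (nat \<times> nat) set" where
  "Acut d S T = S \<times> T \<union> ({1..d} - S) \<times> ({1..d} - T)"

definition Bad :: "nat \<Rightarrow> (nat set \<times> nat set) set" where
  "Bad d = {p \<in> Pow {1..d} \<times> Pow {1..d}. fst p \<noteq> {} \<and> \<not> (fst p = {1..d} \<and> snd p = {1..d})}"

lemma card_Acut:
  assumes "S \<subseteq> {1..d}" "T \<subseteq> {1..d}"
  shows "card (Acut d S T) = card S * card T + card ({1..d} - S) * card ({1..d} - T)"
proof -
  have fS: "finite S" "finite T" using assms finite_subset by auto
  have "card (Acut d S T) = card (S \<times> T) + card (({1..d} - S) \<times> ({1..d} - T))"
    unfolding Acut_def using fS by (intro card_Un_disjoint) auto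
  then show ?thesis by (simp add: card_cartesian_product)
qed

lemma Acut_grid: "S \<subseteq> {1..d} \<Longrightarrow> T \<subseteq> {1..d} \<Longrightarrow> Acut d S T \<subseteq> grid d"
  unfolding Acut_def grid_def by auto

lemma bad_cover:
  shows "PiE {..<s} (\<lambda>_. grid d) - {f. conn d (f ` {..<s})} \<subseteq> (\<Union>p\<in>Bad d. PiE {..<s} (\<lambda>_. Acut d (fst p) (snd p)))"
proof
  fix f assume f: "f \<in> PiE {..<s} (\<lambda>_. grid d) - {f. conn d (f ` {..<s})}"
  then obtain S T where ST: "S \<subseteq> {1..d}" "T \<subseteq> {1..d}" "S \<noteq> {}"
     "f ` {..<s} \<subseteq> Acut d S T" "\<not> (S = {1..d} \<and> T = {1..d})"
    unfolding conn_def Acut_def by auto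
  have "(S,T) \<in> Bad d" using ST unfolding Bad_def by auto
  moreover have "f \<in> PiE {..<s} (\<lambda>_. Acut d S T)" using f ST(4)
    by (auto simp: PiE_iff)
  ultimately show "f \<in> (\<Union>p\<in>Bad d. PiE {..<s} (\<lambda>_. Acut d (fst p) (snd p)))" by force
qed


lemma prob_good:
  assumes d2: "d \<ge> 2" and s: "real s \<ge> 8*real d*ln(real d)"
  shows "real (card (PiE {..<s} (\<lambda>_. grid d) \<inter> {f. conn d (f`{..<s})})) / real (card (PiE {..<s} (\<lambda>_. grid d)))
     \<ge> 1 - 2*((1 + 1/real d^4)^(2*d) - 1)"
proof -
  define \<Omega> where "\<Omega> = PiE {..<s} (\<lambda>_. grid d)"
  define G where "G = {f. conn d (f`{..<s})}"
  define R where "R = {1..d}"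
  define y where "y = 1/real d^4"
  define dd where "dd = real d"
  have dd2: "dd \<ge> 2" using d2 by (simp add: dd_def)
  have y0: "y \<ge> 0" by (simp add: y_def)
  have fR: "finite R" by (simp add: R_def)
  have cR: "card R = d" by (simp add: R_def)
  have fg: "finite (grid d)" by (simp add: grid_def)
  have fO: "finite \<Omega>" unfolding \<Omega>_def using fg by (intro finite_PiE) auto
  have cO: "card \<Omega> = (d*d)^s" unfolding \<Omega>_def by (simp add: card_PiE grid_def card_cartesian_product)
  have fB: "finite (Bad d)" unfolding Bad_def by simp
  have fA: "finite (Acut d (fst p) (snd p))" if "p \<in> Bad d" for p
  proof -
    have "fst p \<subseteq> {1..d}" "snd p \<subseteq> {1..d}" using that unfolding Bad_def by auto
    then show ?thesis using Acut_grid[of "fst p" d "snd p"] fg finite_subset by blast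
  qed
  have "card (\<Omega> - G) \<le> card (\<Union>p\<in>Bad d. PiE {..<s} (\<lambda>_. Acut d (fst p) (snd p)))"
    using bad_cover[of s d] fB unfolding \<Omega>_def G_def
    by (intro card_mono) (auto intro!: finite_PiE fA)
  also have "\<dots> \<le> (\<Sum>p\<in>Bad d. card (PiE {..<s} (\<lambda>_. Acut d (fst p) (snd p))))"
    using fB by (intro card_UN_le)
  also have "\<dots> = (\<Sum>p\<in>Bad d. card (Acut d (fst p) (snd p)) ^ s)"
    by (simp add: card_PiE)
  finally have cb: "real (card (\<Omega> - G)) \<le> (\<Sum>p\<in>Bad d. real (card (Acut d (fst p) (snd p))) ^ s)"
    by (metis (mono_tags, lifting) of_nat_le_iff of_nat_power of_nat_sum sum.cong)
  have Opos: "real (card \<Omega>) > 0" using cO d2 by simp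
  have split: "real (card \<Omega>) = real (card (\<Omega> \<inter> G)) + real (card (\<Omega> - G))"
    using card_Int_Diff[OF fO, of G] by simp
  have "real (card (\<Omega> \<inter> G)) / real (card \<Omega>) = 1 - real (card (\<Omega> - G)) / real (card \<Omega>)"
    using split Opos by (simp add: field_simps)
  moreover have "real (card (\<Omega> - G)) / real (card \<Omega>)
      \<le> (\<Sum>p\<in>Bad d. real (card (Acut d (fst p) (snd p))) ^ s) / real (card \<Omega>)"
    using cb Opos by (intro divide_right_mono) auto
  moreover have "(\<Sum>p\<in>Bad d. real (card (Acut d (fst p) (snd p))) ^ s) / real (card \<Omega>)
      = (\<Sum>p\<in>Bad d. (real (card (Acut d (fst p) (snd p))) / dd^2) ^ s)"
    unfolding sum_divide_distrib cO dd_def by (simp add: power_divide power2_eq_square)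
  moreover have "\<dots> \<le> (\<Sum>p\<in>Bad d. y^(card (fst p) + card (snd p)) + y^(card (R - fst p) + card (R - snd p)))"
  proof (intro sum_mono)
    fix p assume p: "p \<in> Bad d"
    obtain S T where pST: "p = (S,T)" by (cases p)
    have ST: "S \<subseteq> R" "T \<subseteq> R" using p pST by (auto simp: Bad_def R_def)
    have fS: "finite S" "finite T" using ST fR finite_subset by auto
    have cS: "card S \<le> d" "card T \<le> d" using ST card_mono[OF fR] cR by auto
    have cRS: "real (card (R - S)) = dd - real (card S)" "real (card (R - T)) = dd - real (card T)"
      using ST fS cS cR unfolding dd_def by (auto simp: card_Diff_subset of_nat_diff)
    have "real (card (Acut d S T)) = real (card S) * real (card T) + (dd - real (card S)) * (dd - real (card T))"
      using card_Acut[of S d T] ST cRS unfolding R_def by simp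
    then have "(real (card (Acut d S T)) / dd^2) ^ s
        \<le> exp(-4*(real (card S)+real (card T))*ln dd) + exp(-4*((dd-real (card S))+(dd-real (card T)))*ln dd)"
      using term_bound[of "real (card S)" dd "real (card T)" s] cS dd2 s unfolding dd_def by auto
    also have "\<dots> = y^(card S + card T) + y^(card (R - S) + card (R - T))"
      using exp_pow_y[of dd "card S + card T"] exp_pow_y[of dd "card (R-S) + card (R-T)"] dd2 cRS
      unfolding y_def dd_def by simp
    finally show "(real (card (Acut d (fst p) (snd p))) / dd^2) ^ s
        \<le> y^(card (fst p) + card (snd p)) + y^(card (R - fst p) + card (R - snd p))" using pST by simp
  qed
  moreover have "(\<Sum>p\<in>Bad d. y^(card (fst p) + card (snd p)) + y^(card (R - fst p) + card (R - snd p)))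
      \<le> 2*((1 + y)^(2*d) - 1)"
  proof -
    have "(\<Sum>p\<in>Bad d. y^(card (fst p) + card (snd p))) \<le> (1+y)^(2*card R) - 1"
      using sum_pow_card[OF fR, of y] y0 fR unfolding Bad_def R_def
      by (intro sum_pairs[where pz="({},{})"]) auto
    moreover have "(\<Sum>p\<in>Bad d. y^(card (R - fst p) + card (R - snd p))) \<le> (1+y)^(2*card R) - 1"
      using sum_pow_card_compl[OF fR, of y] y0 fR unfolding Bad_def R_def
      by (intro sum_pairs[where pz="({1..d},{1..d})" and h="\<lambda>S. card ({1..d} - S)"]) auto
    ultimately show ?thesis using cR by (simp add: sum.distrib)
  qed
  ultimately show ?thesis unfolding \<Omega>_def[symmetric] G_def[symmetric] y_def by linarith
qed


lemma F_lim:
  assumes e: "e > (0::real)"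
  shows "eventually (\<lambda>d. 2*((1 + 1/real d^4)^(2*d) - 1) < e) sequentially"
proof -
  have lim: "(\<lambda>d::nat. 2*(exp (2 / real d^3) - 1)) \<longlonglongrightarrow> 0" by real_asymp
  have ev: "eventually (\<lambda>d. 2*(exp (2 / real d^3) - 1) < e) sequentially"
    using order_tendstoD(2)[OF lim e] .
  have ev2: "eventually (\<lambda>d::nat. d \<ge> 1) sequentially" by (rule eventually_ge_at_top)
  show ?thesis using ev ev2
  proof eventually_elim
    case (elim d)
    have "(1 + 1/real d^4)^(2*d) \<le> exp (1/real d^4)^(2*d)"
      using exp_ge_add_one_self[of "1/real d^4"] by (intro power_mono) (auto simp: add.commute)
    also have "\<dots> = exp (real (2*d) * (1/real d^4))" by (rule exp_of_nat_mult[symmetric])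
    also have "real (2*d) * (1/real d^4) = 2 / real d^3" using elim(2)
      by (simp add: field_simps power_eq_if eval_nat_numeral)
    finally have "(1 + 1/real d^4)^(2*d) \<le> exp (2 / real d^3)" .
    then show ?case using elim(1) by argo
  qed
qed


theorem theorem6:
  fixes c :: real
  assumes "c > 0"
  shows "\<exists>d0::nat. \<forall>d\<ge>d0. \<forall>s::nat. real s \<ge> 8 * c * real d * ln (real d) \<longrightarrow>
    (\<forall>(E :: real^'n \<Rightarrow> nat \<Rightarrow> real) (q :: nat \<times> nat \<Rightarrow> real) Ztest.
       (\<forall>z\<in>grid d. integrable lborel (\<lambda>x. exp (- senergy d z (E x)))) \<and>
       Ztest \<subseteq> grid d \<and> (\<forall>z\<in>Ztest. q z > 0) \<and> (\<Sum>z\<in>Ztest. q z) = 1 \<longrightarrow>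
       measure_pmf.prob (pmf_of_set (PiE {..<s} (\<lambda>_. grid d)))
         {f. let Ztr = f ` {..<s} in
             \<forall>(ptr :: nat \<times> nat \<Rightarrow> real) (Ehat :: real^'n \<Rightarrow> nat \<Rightarrow> real)
               (Bhat :: nat \<times> nat \<Rightarrow> real) (qhat :: nat \<times> nat \<Rightarrow> real).
               (\<forall>z\<in>Ztr. ptr z > 0) \<and> (\<Sum>z\<in>Ztr. ptr z) = 1 \<and>
               (\<forall>z\<in>Ztr. \<forall>x. aec_post d Ztr ptr Ehat Bhat z x
                              = bayes_post Ztr ptr (cond_density d E) z x) \<and>
               (\<forall>z\<in>grid d. qhat z \<ge> 0) \<and> (\<Sum>z\<in>grid d. qhat z) = 1 \<and>
               (\<forall>z\<in>Ztest. qhat z = q z)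
               \<longrightarrow>
               (\<forall>z\<in>Ztest. \<forall>x.
                  crm_post d {z'\<in>grid d. qhat z' > 0} qhat Ehat
                    (extrap_bias d Ztr ptr (cond_density d E) Ehat Bhat) z x
                  = bayes_post Ztest q (cond_density d E) z x)}
       > 1 - 1 / c)"
proof -
  obtain d1 where d1: "\<And>d. d \<ge> d1 \<Longrightarrow> 2*((1 + 1/real d^4)^(2*d) - 1) < 1/c"
    using F_lim[of "1/c"] assms unfolding eventually_sequentially by auto
  show ?thesis
  proof (intro exI[of _ "max d1 2"] allI impI)
    fix d s :: nat and E :: "real^'n \<Rightarrow> nat \<Rightarrow> real" and q :: "nat \<times> nat \<Rightarrow> real" and Ztest
    assume dd: "max d1 2 \<le> d" and s: "8 * c * real d * ln (real d) \<le> real s"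
      and H: "(\<forall>z\<in>grid d. integrable lborel (\<lambda>x. exp (- senergy d z (E x)))) \<and>
       Ztest \<subseteq> grid d \<and> (\<forall>z\<in>Ztest. q z > 0) \<and> (\<Sum>z\<in>Ztest. q z) = 1"
    define \<Omega> where "\<Omega> = PiE {..<s} (\<lambda>_. grid d)"
    define GG where "GG = {f. let Ztr = f ` {..<s} in
             \<forall>(ptr :: nat \<times> nat \<Rightarrow> real) (Ehat :: real^'n \<Rightarrow> nat \<Rightarrow> real)
               (Bhat :: nat \<times> nat \<Rightarrow> real) (qhat :: nat \<times> nat \<Rightarrow> real).
               (\<forall>z\<in>Ztr. ptr z > 0) \<and> (\<Sum>z\<in>Ztr. ptr z) = 1 \<and>
               (\<forall>z\<in>Ztr. \<forall>x. aec_post d Ztr ptr Ehat Bhat z x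
                              = bayes_post Ztr ptr (cond_density d E) z x) \<and>
               (\<forall>z\<in>grid d. qhat z \<ge> 0) \<and> (\<Sum>z\<in>grid d. qhat z) = 1 \<and>
               (\<forall>z\<in>Ztest. qhat z = q z)
               \<longrightarrow>
               (\<forall>z\<in>Ztest. \<forall>x.
                  crm_post d {z'\<in>grid d. qhat z' > 0} qhat Ehat
                    (extrap_bias d Ztr ptr (cond_density d E) Ehat Bhat) z x
                  = bayes_post Ztest q (cond_density d E) z x)}"
    have d2: "d \<ge> 2" and dd1: "d \<ge> d1" using dd by auto
    have fg: "finite (grid d)" by (simp add: grid_def)
    have gne: "grid d \<noteq> {}" using d2 by (auto simp: grid_def)
    have fO: "finite \<Omega>" unfolding \<Omega>_def using fg by (intro finite_PiE) auto
    have One: "\<Omega> \<noteq> {}" unfolding \<Omega>_def using gne by (simp add: PiE_eq_empty_iff)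
    have prob: "measure_pmf.prob (pmf_of_set \<Omega>) GG = real (card (\<Omega> \<inter> GG)) / real (card \<Omega>)"
      using measure_pmf_of_set[OF One fO] by simp
    show "measure_pmf.prob (pmf_of_set (PiE {..<s} (\<lambda>_. grid d))) GG > 1 - 1/c"
    proof (cases "c < 1")
      case True
      then have "1 - 1/c < 0" using assms by (simp add: field_simps)
      then show ?thesis unfolding \<Omega>_def[symmetric] using measure_nonneg by (smt (verit))
    next
      case False
      have lnd: "ln (real d) > 0" using d2 by simp
      have "8 * real d * ln (real d) \<le> 8 * c * real d * ln (real d)"
        using False lnd d2 by (simp add: mult_right_mono)
      then have s8: "8 * real d * ln (real d) \<le> real s" using s by linarith
      have "8 * real d * ln (real d) > 0" using lnd d2 by simp
      then have s0: "s > 0" using s8 by linarith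
      have sub: "\<Omega> \<inter> {f. conn d (f`{..<s})} \<subseteq> \<Omega> \<inter> GG"
      proof
        fix f assume f: "f \<in> \<Omega> \<inter> {f. conn d (f`{..<s})}"
        have Zg: "f ` {..<s} \<subseteq> grid d" using f unfolding \<Omega>_def by (auto simp: PiE_iff)
        have Zne: "f ` {..<s} \<noteq> {}" using s0 by auto
        have "f \<in> GG" unfolding GG_def Let_def
        proof (intro CollectI allI impI)
          fix ptr :: "nat \<times> nat \<Rightarrow> real" and Ehat :: "real^'n \<Rightarrow> nat \<Rightarrow> real"
            and Bhat :: "nat \<times> nat \<Rightarrow> real" and qhat :: "nat \<times> nat \<Rightarrow> real"
          assume A: "(\<forall>z\<in>f ` {..<s}. ptr z > 0) \<and> (\<Sum>z\<in>f ` {..<s}. ptr z) = 1 \<and>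
               (\<forall>z\<in>f ` {..<s}. \<forall>x. aec_post d (f ` {..<s}) ptr Ehat Bhat z x
                              = bayes_post (f ` {..<s}) ptr (cond_density d E) z x) \<and>
               (\<forall>z\<in>grid d. qhat z \<ge> 0) \<and> (\<Sum>z\<in>grid d. qhat z) = 1 \<and>
               (\<forall>z\<in>Ztest. qhat z = q z)"
          show "\<forall>z\<in>Ztest. \<forall>x.
                  crm_post d {z'\<in>grid d. qhat z' > 0} qhat Ehat
                    (extrap_bias d (f ` {..<s}) ptr (cond_density d E) Ehat Bhat) z x
                  = bayes_post Ztest q (cond_density d E) z x"
            using det[of d "f ` {..<s}" E Ztest q ptr Ehat Bhat qhat] d2 Zg Zne f H A by auto
        qed
        then show "f \<in> \<Omega> \<inter> GG" using f by auto
      qed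
      have "real (card (\<Omega> \<inter> {f. conn d (f`{..<s})})) \<le> real (card (\<Omega> \<inter> GG))"
        using sub fO by (simp add: card_mono)
      then have "real (card (\<Omega> \<inter> {f. conn d (f`{..<s})})) / real (card \<Omega>)
          \<le> real (card (\<Omega> \<inter> GG)) / real (card \<Omega>)" by (simp add: divide_right_mono)
      moreover have "real (card (\<Omega> \<inter> {f. conn d (f`{..<s})})) / real (card \<Omega>)
          \<ge> 1 - 2*((1 + 1/real d^4)^(2*d) - 1)"
        using prob_good[OF d2 s8] unfolding \<Omega>_def .
      moreover have "2*((1 + 1/real d^4)^(2*d) - 1) < 1/c" using d1[OF dd1] .
      ultimately show ?thesis using prob unfolding \<Omega>_def[symmetric] by linarith
    qed
  qed
qed

end
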